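(* (Advantage of the fewer.) Fix $M$, $p$, $q$, $\mu$ as in the context, take attention bias $\alpha=1$ and a preference for like-minded news $\gamma$ with $0<\gamma<1$, and use the limit interim efficiencies $\mathcal P_L$ defined in the context (uniform initial ranking, $N,\kappa\to\infty$). For $j\in\{0,1,\dots,M\}$ let $$Q^{\mathrm{corr}}(j)=\mathcal P_j,\qquad Q^{\mathrm{inc}}(j)=1-\mathcal P_{M-j},$$ which are, respectively, the limit total probability that a searcher clicks on one of the websites in a set $J$ of $j$ websites all carrying the correct signal, or all carrying the incorrect signal (the remaining $M-j$ websites carrying the other signal). Then for every $j\in\{1,2,\dots,M-2\}$ with $j\neq \frac{M-1}{2}$, $$Q^{\mathrm{corr}}(j+1)\le Q^{\mathrm{corr}}(j)\quad\text{and}\quad Q^{\mathrm{inc}}(j+1)\le Q^{\mathrm{inc}}(j),$$ i.e. the limit total clicking probability on all websites carrying a fixed signal is (weakly) decreasing in the number $\#J$ of such websites whenever $\#J\notin\{0,\frac{M-1}{2},M-1\}$.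
   Context: Model. There are $M$ websites ($M\ge 3$ odd) and a binary state $\omega$. Each website carries a fixed signal $y_m\in\{0,1\}$; $L\in\{0,\dots,M\}$ denotes the number of websites whose signal is correct ($y_m=\omega$). The set of websites carrying the signal held by a strict majority of websites is $K$. Parameters: $p\in(\tfrac12,1)$ (accuracy of a searcher's private signal $x_n$ about $\omega$), $q\in(\tfrac12,1)$ (accuracy of each website's signal), $\mu\in(\tfrac12,1]$ (accuracy of a searcher's signal $z_n$ about the website-majority signal), with $\mu q>p$; $\gamma\in[0,1]$ (preference for like-minded news); $\alpha\ge 0$ (attention bias; the baseline model has $\alpha=1$). Searchers arrive one at a time; a searcher with signals $(x_n,z_n)$ facing ranking $r\in\Delta(M)$ clicks website $m$ with probability $\rho_m=r_m^\alpha v^*_m/\sum_{m'}r_{m'}^\alpha v^*_{m'}$, where $v^*_m$ equals $1/[m]$ if $y_m=x_n=z_n$, $\gamma/[m]$ if $y_m=x_n\ne z_n$, $(1-\gamma)/[m]$ if $y_m=z_n\neq x_n$, and $0$ otherwise, with $[m]$ the number of websites carrying the same signal as $m$. The popularity ranking is updated by $r_{t,m}=\frac{\kappa}{\kappa+1}r_{t-1,m}+\frac{1}{\kappa+1}\rho_{t-1,m}$. Reduced limit dynamics (operative definitions). Call $L$ a minority if $1\le L\le\frac{M-1}{2}$ and a majority if $\frac{M+1}{2}\le L\le M-1$. Writing $u=(x/L)^\alpha$, $w=((1-x)/(M-L))^\alpha$, define for $x\in[0,1]$ $$\theta_L(x)=p(1-\mu)+\frac{p\mu\gamma u}{\gamma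 u+(1-\gamma)w}+\frac{(1-p)(1-\mu)(1-\gamma)u}{(1-\gamma)u+\gamma w}\quad\text{($L$ minority)},$$ $$\theta_L(x)=p\mu+\frac{p(1-\mu)\gamma u}{\gamma u+(1-\gamma)w}+\frac{(1-p)\mu(1-\gamma)u}{(1-\gamma)u+\gamma w}\quad\text{($L$ majority)}.$$ $\theta_L(x)$ is the expected total probability that a searcher clicks a correct-signal website when the total ranking mass on the $L$ correct-signal websites is $x$, spread evenly among them. The limit interim efficiency (limit probability, as the number of searchers $N$ and persistence $\kappa$ go to infinity, in the mean-dynamics approximation, that a searcher clicks a correct-signal website, starting from the uniform initial ranking) is $\mathcal P_L=\lim_{t\to\infty}X(t)$, where $X$ solves $\dot X=\theta_L(X)-X$, $X(0)=L/M$; and $\mathcal P_0=0$, $\mathcal P_M=1$. Note $\theta_L(\mathcal P_L)=\mathcal P_L$ for $1\le L\le M-1$. *)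

theory Defs
  imports "HOL-Analysis.Analysis"
begin

text \<open>Reduced limit dynamics. theta M p mu gamma alpha L x is the expected total probability
  that a searcher clicks a correct-signal website when the ranking mass on the L
  correct-signal websites is x (spread evenly).  L is a minority iff 1 \<le> L and 2 L \<le> M - 1,
  a majority iff M + 1 \<le> 2 L and L \<le> M - 1.\<close>

definition theta :: "nat \<Rightarrow> real \<Rightarrow> real \<Rightarrow> real \<Rightarrow> real \<Rightarrow> nat \<Rightarrow> real \<Rightarrow> real" where
  "theta M p mu gamma alpha L x =
     (let u = (x / real L) powr alpha;
          w = ((1 - x) / real (M - L)) powr alpha
      in if 2 * L < M then
           p * (1 - mu) + p * mu * gamma * u / (gamma * u + (1 - gamma) * w)
             + (1 - p) * (1 - mu) * (1 - gamma) * u / ((1 - gamma) * u + gamma * w)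
         else
           p * mu + p * (1 - mu) * gamma * u / (gamma * u + (1 - gamma) * w)
             + (1 - p) * mu * (1 - gamma) * u / ((1 - gamma) * u + gamma * w))"

definition mean_dyn_solution ::
  "nat \<Rightarrow> real \<Rightarrow> real \<Rightarrow> real \<Rightarrow> real \<Rightarrow> nat \<Rightarrow> (real \<Rightarrow> real) \<Rightarrow> bool" where
  "mean_dyn_solution M p mu gamma alpha L X \<longleftrightarrow>
     X 0 = real L / real M \<and>
     (\<forall>t\<ge>0. (X has_real_derivative (theta M p mu gamma alpha L (X t) - X t))
               (at t within {0..}))"

definition interim_eff :: "nat \<Rightarrow> (nat \<Rightarrow> real) \<Rightarrow> nat \<Rightarrow> real" where
  "interim_eff M Plim L = (if L = 0 then 0 else if L = M then 1 else Plim L)"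

end

theory Submission
  imports Defs
begin

definition phi :: "real \<Rightarrow> real \<Rightarrow> real \<Rightarrow> real \<Rightarrow> real" where
  "phi c d u w = c * u / (c * u + d * w)"

lemma phi_bounds:
  assumes "0 < c" "0 < d" "0 \<le> u" "0 \<le> w" "0 < u + w"
  shows "0 \<le> phi c d u w \<and> phi c d u w \<le> 1"
proof -
  have D: "c * u + d * w > 0"
    by (metis add_pos_nonneg add_nonneg_pos assms mult_nonneg_nonneg mult_pos_pos
        order_less_le add_cancel_right_left)
  show ?thesis using D assms by (auto simp: phi_def divide_simps)
qed

lemma phi_ge:
  assumes "0 < c" "0 < d" "c + d = 1" "0 \<le> w" "w \<le> u" "0 < u"
  shows "c \<le> phi c d u w"
proof -
  have D: "c * u + d * w > 0" using assms by (simp add: add_pos_nonneg)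
  have "c * (c * u + d * w) \<le> c * u"
  proof -
    have h: "c * d * w \<le> c * d * u" using assms by simp
    have "c * u = c * (c + d) * u" using assms by simp
    hence e: "c * u = c*c*u + c*d*u" by (simp add: algebra_simps)
    have "c * (c * u + d * w) = c*c*u + c*d*w" by (simp add: algebra_simps)
    thus ?thesis using e h by linarith
  qed
  thus ?thesis using D by (simp add: phi_def divide_simps)
qed

lemma phi_lt:
  assumes "0 < c" "0 < d" "c + d = 1" "0 \<le> u" "u < w"
  shows "phi c d u w < c"
proof -
  have D: "c * u + d * w > 0" using assms by (simp add: add_nonneg_pos)
  have "c * u < c * (c * u + d * w)"
  proof -
    have h: "c * d * u < c * d * w" using assms by simp
    have "c * u = c * (c + d) * u" using assms by simp
    hence e: "c * u = c*c*u + c*d*u" by (simp add: algebra_simps)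
    have "c * (c * u + d * w) = c*c*u + c*d*w" by (simp add: algebra_simps)
    thus ?thesis using e h by linarith
  qed
  thus ?thesis using D by (simp add: phi_def divide_simps)
qed

lemma phi_eq:
  assumes "0 < c" "0 < d" "c + d = 1" "0 < u"
  shows "phi c d u u = c"
proof -
  have "c * u + d * u = u" using assms by (metis distrib_right mult_1)
  thus ?thesis using assms by (simp add: phi_def)
qed

lemma phi_mono:
  assumes "0 < c" "0 < d" "0 < u'" "u' \<le> u" "0 < w" "w \<le> w'" "u' < u \<or> w < w'"
  shows "phi c d u' w' < phi c d u w"
proof -
  have D1: "c * u' + d * w' > 0" "c * u + d * w > 0" using assms by (simp_all add: add_pos_pos)
  have k: "u' * w < u * w'"
  proof -
    have "u' * w \<le> u * w" "u * w \<le> u * w'" using assms by (simp_all add: mult_right_mono)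
    moreover have "u' * w < u * w \<or> u * w < u * w'" using assms by auto
    ultimately show ?thesis by linarith
  qed
  have "c * d * (u' * w) < c * d * (u * w')" using k assms by simp
  hence "c * u' * (c * u + d * w) < c * u * (c * u' + d * w')" by (simp add: algebra_simps)
  thus ?thesis using D1 by (simp add: phi_def divide_simps)
qed

definition Fh :: "real \<Rightarrow> real \<Rightarrow> real \<Rightarrow> real \<Rightarrow> real \<Rightarrow> real \<Rightarrow> real" where
  "Fh A B C g u w = A + B * g * u / (g * u + (1 - g) * w)
      + C * (1 - g) * u / ((1 - g) * u + g * w)"

lemma Fh_phi: "Fh A B C g u w = A + B * phi g (1 - g) u w + C * phi (1 - g) g u w"
  by (simp add: Fh_def phi_def)

definition th :: "real \<Rightarrow> real \<Rightarrow> real \<Rightarrow> real \<Rightarrow> nat \<Rightarrow> nat \<Rightarrow> real \<Rightarrow> real" where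
  "th A B C g N K x = Fh A B C g \<bar>x / real K\<bar> \<bar>(1 - x) / real (N - K)\<bar>"

lemma lin_pos:
  fixes a b :: real
  assumes "0 < c" "c < 1" "0 \<le> a" "0 \<le> b" "0 < a + b"
  shows "0 < c * a + (1 - c) * b"
proof (cases "a > 0")
  case True
  hence "c * a > 0" using assms by simp
  moreover have "(1 - c) * b \<ge> 0" using assms by simp
  ultimately show ?thesis by linarith
next
  case False
  hence "b > 0" using assms by simp
  hence "(1 - c) * b > 0" using assms by simp
  moreover have "c * a \<ge> 0" using assms by simp
  ultimately show ?thesis by linarith
qed

locale cls =
  fixes A B C g :: real and N :: nat
  assumes A: "0 \<le> A" and B: "0 \<le> B" and C: "0 \<le> C" and BC: "0 < B + C"
    and S: "A + B + C \<le> 1" and g: "0 < g" "g < 1"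
begin

definition c0 where "c0 = A + B * g + C * (1 - g)"

lemma uw_pos:
  assumes "1 \<le> K" "K < N"
  shows "0 < \<bar>x / real K\<bar> + \<bar>(1 - x) / real (N - K)\<bar>"
proof -
  have KN: "real K > 0" "real (N - K) > 0" using assms by auto
  show ?thesis
  proof (cases "x = 0")
    case True thus ?thesis using KN by simp
  next
    case False
    hence "0 < \<bar>x / real K\<bar>" using KN by simp
    thus ?thesis by (smt (verit) abs_ge_zero)
  qed
qed



lemma th_bounds:
  assumes "1 \<le> K" "K < N"
  shows "A \<le> th A B C g N K x \<and> th A B C g N K x \<le> 1"
proof -
  note p = uw_pos[OF assms, of x]
  have 1: "0 \<le> phi g (1-g) \<bar>x / real K\<bar> \<bar>(1 - x) / real (N - K)\<bar> \<and>
      phi g (1-g) \<bar>x / real K\<bar> \<bar>(1 - x) / real (N - K)\<bar> \<le> 1"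
    by (rule phi_bounds) (use g p in auto)
  have 2: "0 \<le> phi (1-g) g \<bar>x / real K\<bar> \<bar>(1 - x) / real (N - K)\<bar> \<and>
      phi (1-g) g \<bar>x / real K\<bar> \<bar>(1 - x) / real (N - K)\<bar> \<le> 1"
    by (rule phi_bounds) (use g p in auto)
  have "B * phi g (1-g) \<bar>x / real K\<bar> \<bar>(1 - x) / real (N - K)\<bar> \<le> B"
    "0 \<le> B * phi g (1-g) \<bar>x / real K\<bar> \<bar>(1 - x) / real (N - K)\<bar>"
    using 1 B by (auto simp: mult_left_le)
  moreover have "C * phi (1-g) g \<bar>x / real K\<bar> \<bar>(1 - x) / real (N - K)\<bar> \<le> C"
    "0 \<le> C * phi (1-g) g \<bar>x / real K\<bar> \<bar>(1 - x) / real (N - K)\<bar>"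
    using 2 C by (auto simp: mult_left_le)
  ultimately show ?thesis using S unfolding th_def Fh_phi by linarith
qed

lemma th_cont:
  assumes "1 \<le> K" "K < N"
  shows "isCont (th A B C g N K) x"
proof -
  have "continuous_on UNIV (th A B C g N K)"
    unfolding th_def Fh_def
  proof (intro continuous_intros ballI)
    fix y :: real
    note p = uw_pos[OF assms, of y]
    show "g * \<bar>y / real K\<bar> + (1 - g) * \<bar>(1 - y) / real (N - K)\<bar> \<noteq> 0"
      using lin_pos[OF g abs_ge_zero abs_ge_zero p] by simp
    show "(1 - g) * \<bar>y / real K\<bar> + g * \<bar>(1 - y) / real (N - K)\<bar> \<noteq> 0"
      using lin_pos[of "1-g", OF _ _ abs_ge_zero abs_ge_zero p] g by simp
  qed (use assms in auto)
  thus ?thesis by (simp add: continuous_on_eq_continuous_at)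
qed

lemma th_at:
  assumes "1 \<le> K" "K < N"
  shows "th A B C g N K (real K / real N) = c0"
proof -
  have "\<bar>(real K / real N) / real K\<bar> = 1 / real N" using assms by auto
  moreover have "\<bar>(1 - real K / real N) / real (N - K)\<bar> = 1 / real N"
    using assms by (simp add: divide_simps of_nat_diff)
  ultimately show ?thesis using assms g
    by (simp add: th_def Fh_phi phi_eq c0_def)
qed

lemma uw_ge:
  assumes "1 \<le> K" "K < N" "real K / real N \<le> x" "x \<le> 1"
  shows "\<bar>(1 - x) / real (N - K)\<bar> \<le> \<bar>x / real K\<bar> \<and> 0 < \<bar>x / real K\<bar>"
proof -
  have KN: "real K > 0" "real N > 0" "real (N - K) > 0" "real (N-K) = real N - real K"
    using assms by (auto simp: of_nat_diff)
  have "real K \<le> x * real N" using assms KN by (simp add: divide_simps)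
  hence "(1 - x) * real K \<le> x * (real N - real K)" by (simp add: algebra_simps)
  hence "(1 - x) / real (N - K) \<le> x / real K" using KN by (simp add: divide_simps)
  moreover have "x > 0" using assms KN by (smt (verit) divide_pos_pos)
  ultimately show ?thesis using KN assms by auto
qed

lemma uw_lt:
  assumes "1 \<le> K" "K < N" "x < real K / real N" "0 \<le> x"
  shows "\<bar>x / real K\<bar> < \<bar>(1 - x) / real (N - K)\<bar>"
proof -
  have KN: "real K > 0" "real N > 0" "real (N - K) > 0" "real (N-K) = real N - real K"
    using assms by (auto simp: of_nat_diff)
  have "x * real N < real K" using assms KN by (simp add: divide_simps)
  hence "x * (real N - real K) < (1 - x) * real K" by (simp add: algebra_simps)
  hence "x / real K < (1 - x) / real (N - K)" using KN by (simp add: divide_simps)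
  moreover have "x < 1" using assms KN
    by (smt (verit) divide_le_eq_1 of_nat_less_iff)
  ultimately show ?thesis using KN assms by auto
qed

lemma th_ge:
  assumes "1 \<le> K" "K < N" "real K / real N \<le> x" "x \<le> 1"
  shows "c0 \<le> th A B C g N K x"
proof -
  note u = uw_ge[OF assms]
  have "g \<le> phi g (1-g) \<bar>x / real K\<bar> \<bar>(1 - x) / real (N - K)\<bar>"
    by (rule phi_ge) (use g u in auto)
  moreover have "1 - g \<le> phi (1-g) g \<bar>x / real K\<bar> \<bar>(1 - x) / real (N - K)\<bar>"
    by (rule phi_ge) (use g u in auto)
  ultimately show ?thesis using B C unfolding th_def Fh_phi c0_def
    by (smt (verit) mult_left_mono)
qed

lemma th_lt:
  assumes "1 \<le> K" "K < N" "x < real K / real N" "0 \<le> x"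
  shows "th A B C g N K x < c0"
proof -
  note u = uw_lt[OF assms]
  have "phi g (1-g) \<bar>x / real K\<bar> \<bar>(1 - x) / real (N - K)\<bar> < g"
    by (rule phi_lt) (use g u in auto)
  moreover have "phi (1-g) g \<bar>x / real K\<bar> \<bar>(1 - x) / real (N - K)\<bar> < 1 - g"
    by (rule phi_lt) (use g u in auto)
  ultimately show ?thesis using B C BC unfolding th_def Fh_phi c0_def
    by (smt (verit) mult_left_mono mult_strict_left_mono)
qed

lemma th_mono:
  assumes "1 \<le> K" "K + 1 < N" "0 < x" "x < 1"
  shows "th A B C g N (K + 1) x < th A B C g N K x"
proof -
  have KN: "real K > 0" "real (N - (K+1)) > 0" "real (N - K) > 0"
     "real (N - K) = real (N - (K+1)) + 1"
    using assms by (auto simp: of_nat_diff)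
  have u: "0 < \<bar>x / real (K+1)\<bar>" "\<bar>x / real (K+1)\<bar> < \<bar>x / real K\<bar>"
    using assms KN by (auto simp: divide_strict_left_mono)
  have w: "0 < \<bar>(1 - x) / real (N - K)\<bar>"
     "\<bar>(1 - x) / real (N - K)\<bar> < \<bar>(1 - x) / real (N - (K+1))\<bar>"
    using assms KN by (auto simp: divide_strict_left_mono)
  have "phi g (1-g) \<bar>x / real (K+1)\<bar> \<bar>(1 - x) / real (N - (K+1))\<bar>
      < phi g (1-g) \<bar>x / real K\<bar> \<bar>(1 - x) / real (N - K)\<bar>"
    by (rule phi_mono) (use g u w in auto)
  moreover have "phi (1-g) g \<bar>x / real (K+1)\<bar> \<bar>(1 - x) / real (N - (K+1))\<bar>
      < phi (1-g) g \<bar>x / real K\<bar> \<bar>(1 - x) / real (N - K)\<bar>"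
    by (rule phi_mono) (use g u w in auto)
  ultimately show ?thesis using B C BC unfolding th_def Fh_phi
    by (smt (verit) mult_left_mono mult_strict_left_mono)
qed

end

lemma upper_barrier:
  fixes X G :: "real \<Rightarrow> real"
  assumes d: "\<And>t. t \<ge> 0 \<Longrightarrow> (X has_real_derivative G (X t)) (at t within {0..})"
    and X0: "X 0 \<le> b" and Gb: "G b < 0" and t: "t \<ge> 0"
  shows "X t \<le> b"
proof (rule ccontr)
  assume "\<not> X t \<le> b"
  hence Xt: "X t > b" by simp
  have cont: "continuous_on {0..} X"
    by (rule DERIV_continuous_on) (use d in auto)
  hence contt: "continuous_on {0..t} X" by (rule continuous_on_subset) auto
  define Z where "Z = {s \<in> {0..t}. X s \<le> b}"
  have Zc: "closed Z" unfolding Z_def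
    by (rule continuous_on_closed_Collect_le[OF contt]) (auto intro: continuous_intros)
  have Zne: "0 \<in> Z" using X0 t by (simp add: Z_def)
  have Zb: "bdd_above Z" unfolding Z_def by (auto intro: bdd_aboveI[where M=t])
  define s0 where "s0 = Sup Z"
  have s0Z: "s0 \<in> Z" unfolding s0_def by (rule closed_contains_Sup) (use Zne Zb Zc in auto)
  have s0: "0 \<le> s0" "s0 \<le> t" "X s0 \<le> b" using s0Z by (auto simp: Z_def)
  have s0t: "s0 < t" using s0 Xt by (cases "s0 = t") auto
  have up: "\<And>s. s \<in> Z \<Longrightarrow> s \<le> s0" unfolding s0_def by (rule cSup_upper) (use Zb in auto)
  obtain c where c: "s0 \<le> c" "c \<le> t" "X c = b"
    using IVT'[of X s0 b t] s0 Xt continuous_on_subset[OF contt, of "{s0..t}"] by auto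
  hence "c \<in> Z" using s0 by (auto simp: Z_def)
  hence "c = s0" using up c by force
  hence Xs0: "X s0 = b" using c by simp
  have "(X has_real_derivative G b) (at s0 within {0..})" using d[OF s0(1)] Xs0 by simp
  from has_real_derivative_neg_dec_right[OF this Gb]
  obtain e where e: "e > 0" "\<And>h. h > 0 \<Longrightarrow> s0 + h \<in> {0..} \<Longrightarrow> h < e \<Longrightarrow> X s0 > X (s0 + h)"
    by blast
  define h where "h = min (e/2) (t - s0)"
  have h: "h > 0" "h < e" "s0 + h \<le> t" using e s0t by (auto simp: h_def)
  have "X (s0 + h) < b" using e(2)[OF h(1) _ h(2)] s0 h Xs0 by auto
  hence "s0 + h \<in> Z" using s0 h by (auto simp: Z_def)
  hence "s0 + h \<le> s0" by (rule up)
  thus False using h by simp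
qed

lemma lower_barrier:
  fixes X G :: "real \<Rightarrow> real"
  assumes d: "\<And>t. t \<ge> 0 \<Longrightarrow> (X has_real_derivative G (X t)) (at t within {0..})"
    and X0: "b \<le> X 0" and Gb: "G b > 0" and t: "t \<ge> 0"
  shows "b \<le> X t"
proof -
  have "(\<lambda>s. - X s) t \<le> - b"
    by (rule upper_barrier[where G = "\<lambda>y. - G (- y)"])
       (use DERIV_minus[OF d] X0 Gb t in auto)
  thus ?thesis by simp
qed

lemma limit_le:
  fixes X :: "real \<Rightarrow> real"
  assumes "(X \<longlongrightarrow> P) at_top" "\<And>t. t \<ge> 0 \<Longrightarrow> X t \<le> b"
  shows "P \<le> b"
  by (rule tendsto_upperbound[OF assms(1)])
     (use assms(2) in \<open>auto simp: eventually_at_top_linorder\<close>)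

lemma limit_ge:
  fixes X :: "real \<Rightarrow> real"
  assumes "(X \<longlongrightarrow> P) at_top" "\<And>t. t \<ge> 0 \<Longrightarrow> b \<le> X t"
  shows "b \<le> P"
  by (rule tendsto_lowerbound[OF assms(1)])
     (use assms(2) in \<open>auto simp: eventually_at_top_linorder\<close>)

lemma deriv_limit_zero:
  fixes X D :: "real \<Rightarrow> real"
  assumes d: "\<And>t. t \<ge> 0 \<Longrightarrow> (X has_real_derivative D t) (at t within {0..})"
    and X: "(X \<longlongrightarrow> P) at_top" and D: "(D \<longlongrightarrow> dd) at_top"
  shows "dd = 0"
proof (rule ccontr)
  assume "dd \<noteq> 0"
  define e where "e = \<bar>dd\<bar> / 2"
  have e: "e > 0" using \<open>dd \<noteq> 0\<close> by (simp add: e_def)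
  have ev1: "\<forall>\<^sub>F t in at_top. dist (D t) dd < e" using D e by (rule tendstoD)
  have ev2: "\<forall>\<^sub>F t in at_top. dist (X t) P < e / 2" using X e by (intro tendstoD) auto
  have "\<forall>\<^sub>F t in at_top. dist (D t) dd < e \<and> dist (X t) P < e / 2 \<and> t \<ge> (0::real)"
    using ev1 ev2 eventually_ge_at_top[of "0::real"] by eventually_elim auto
  then obtain T where T: "\<And>t. t \<ge> T \<Longrightarrow> dist (D t) dd < e \<and> dist (X t) P < e / 2 \<and> t \<ge> 0"
    by (auto simp: eventually_at_top_linorder)
  have "\<exists>x\<in>{T<..<T+1}. X (T+1) - X T = (\<lambda>h. D x * h) (T + 1 - T)"
  proof (rule mvt_simple)
    fix x assume x: "T \<le> x" "x \<le> T + 1"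
    hence "x \<ge> 0" using T[of T] by auto
    have "{T..T+1} \<subseteq> {0..}" using T[of T] by auto
    from has_field_derivative_subset[OF d[OF \<open>x \<ge> 0\<close>] this]
    show "(X has_derivative (\<lambda>h. D x * h)) (at x within {T..T+1})"
      by (simp add: has_field_derivative_def)
  qed simp
  then obtain x where x: "T < x" "x < T + 1" "X (T+1) - X T = D x" by auto
  have "\<bar>D x - dd\<bar> < e" using T[of x] x by (simp add: dist_real_def)
  hence "\<bar>D x\<bar> > e" using e_def by linarith
  moreover have "\<bar>X (T+1) - P\<bar> < e/2" "\<bar>X T - P\<bar> < e/2"
    using T[of "T+1"] T[of T] by (auto simp: dist_real_def)
  ultimately show False using x by linarith
qed

context cls begin

lemma sol_props:
  assumes K: "1 \<le> K" "K < N"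
    and d: "\<And>t. t \<ge> 0 \<Longrightarrow> (X has_real_derivative (th A B C g N K (X t) - X t)) (at t within {0..})"
    and X0: "X 0 = real K / real N"
    and lim: "(X \<longlongrightarrow> P) at_top"
  shows "th A B C g N K P = P" "0 \<le> P" "P \<le> 1"
    "real K / real N \<le> P \<Longrightarrow> c0 \<le> P" "P < real K / real N \<Longrightarrow> P < c0"
    "\<And>b. real K / real N \<le> b \<Longrightarrow> th A B C g N K b < b \<Longrightarrow> P \<le> b"
    "\<And>b. b \<le> real K / real N \<Longrightarrow> th A B C g N K b > b \<Longrightarrow> b \<le> P"
proof -
  let ?G = "\<lambda>x. th A B C g N K x - x"
  have "((\<lambda>t. ?G (X t)) \<longlongrightarrow> ?G P) at_top"
    by (intro tendsto_diff isCont_tendsto_compose[OF th_cont[OF K]] lim)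
  from deriv_limit_zero[OF d lim this]
  show fp: "th A B C g N K P = P" by simp
  show up: "\<And>b. real K / real N \<le> b \<Longrightarrow> th A B C g N K b < b \<Longrightarrow> P \<le> b"
  proof -
    fix b assume "real K / real N \<le> b" "th A B C g N K b < b"
    hence "\<And>t. t \<ge> 0 \<Longrightarrow> X t \<le> b"
      using upper_barrier[where G = ?G and X = X and b = b, OF d] X0 by simp
    thus "P \<le> b" by (rule limit_le[OF lim])
  qed
  show lo: "\<And>b. b \<le> real K / real N \<Longrightarrow> th A B C g N K b > b \<Longrightarrow> b \<le> P"
  proof -
    fix b assume "b \<le> real K / real N" "th A B C g N K b > b"
    hence "\<And>t. t \<ge> 0 \<Longrightarrow> b \<le> X t"
      using lower_barrier[where G = ?G and X = X and b = b, OF d] X0 by simp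
    thus "b \<le> P" by (rule limit_ge[OF lim])
  qed
  have KN: "0 \<le> real K / real N" "real K / real N \<le> 1" using K by auto
  show P0: "0 \<le> P"
  proof (rule ccontr)
    assume "\<not> 0 \<le> P"
    hence "P / 2 < 0" by simp
    moreover have "A \<le> th A B C g N K (P/2)" using th_bounds[OF K] by blast
    ultimately have "P / 2 \<le> P" using lo[of "P/2"] KN A by linarith
    thus False using \<open>\<not> 0 \<le> P\<close> by simp
  qed
  show P1: "P \<le> 1"
  proof (rule ccontr)
    assume "\<not> P \<le> 1"
    hence "(P + 1) / 2 > 1" by simp
    moreover have "th A B C g N K ((P+1)/2) \<le> 1" using th_bounds[OF K] by blast
    ultimately have "P \<le> (P+1)/2" using up[of "(P+1)/2"] KN by linarith
    thus False using \<open>\<not> P \<le> 1\<close> by simp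
  qed
  show "real K / real N \<le> P \<Longrightarrow> c0 \<le> P" using th_ge[OF K _ P1] fp by simp
  show "P < real K / real N \<Longrightarrow> P < c0" using th_lt[OF K _ P0] fp by simp
qed

lemma pair:
  assumes L: "1 \<le> L" "L + 1 < N"
    and dX: "\<And>t. t \<ge> 0 \<Longrightarrow> (X has_real_derivative (th A B C g N L (X t) - X t)) (at t within {0..})"
    and X0: "X 0 = real L / real N"
    and limX: "(X \<longlongrightarrow> P) at_top"
    and dY: "\<And>t. t \<ge> 0 \<Longrightarrow> (Y has_real_derivative (th A B C g N (L+1) (Y t) - Y t)) (at t within {0..})"
    and Y0: "Y 0 = real (L+1) / real N"
    and limY: "(Y \<longlongrightarrow> P') at_top"
  shows "P' \<le> P"
proof (rule ccontr)
  assume "\<not> P' \<le> P"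
  hence lt: "P < P'" by simp
  have L1: "1 \<le> L + 1" "L + 1 < N" "L < N" using L by auto
  note x = sol_props[OF L(1) L1(3) dX X0 limX]
  note y = sol_props[OF L1(1) L1(2) dY Y0 limY]
  define a where "a = real L / real N"
  define a' where "a' = real (L+1) / real N"
  have aa: "0 < a" "a < a'" "a' < 1" using L by (auto simp: a_def a'_def divide_simps)
  have tha: "th A B C g N L a = c0" unfolding a_def by (rule th_at) (use L in auto)
  have tha': "th A B C g N (L+1) a' = c0" unfolding a'_def by (rule th_at) (use L in auto)
  have mono: "\<And>z. 0 < z \<Longrightarrow> z < 1 \<Longrightarrow> th A B C g N (L+1) z < th A B C g N L z"
    by (rule th_mono) (use L in auto)
  show False
  proof (cases "a \<le> P")
    case True
    hence cP: "c0 \<le> P" using x(4) by (simp add: a_def)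
    show ?thesis
    proof (cases "a' \<le> P")
      case True
      have "th A B C g N (L+1) P < P" using mono[of P] x(1) True aa lt y(3) by linarith
      hence "P' \<le> P" using y(6) True by (simp add: a'_def)
      thus False using lt by simp
    next
      case False
      hence "th A B C g N (L+1) a' < a'" using tha' cP by linarith
      hence "P' \<le> a'" using y(6)[of a'] by (simp add: a'_def)
      moreover have "P' \<noteq> a'" using y(1) tha' cP False by auto
      moreover have "P' < a' \<Longrightarrow> P' < c0" using y(5) by (simp add: a'_def)
      ultimately show False using cP lt by linarith
    qed
  next
    case False
    hence Pc: "P < c0" using x(5) by (simp add: a_def)
    have c0a: "c0 \<le> a"
    proof (rule ccontr)
      assume "\<not> c0 \<le> a"
      hence "a \<le> P" using x(7)[of a] tha by (simp add: a_def)
      thus False using False by simp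
    qed
    show ?thesis
    proof (cases "P' \<le> a")
      case True
      have "P' < th A B C g N L P'" using mono[of P'] y(1) True aa lt x(2) by linarith
      hence "P' \<le> P" using x(7) True by (simp add: a_def)
      thus False using lt by simp
    next
      case F2: False
      have "\<not> P' < a'"
      proof
        assume "P' < a'"
        hence "P' < c0" using y(5) by (simp add: a'_def)
        thus False using F2 c0a by linarith
      qed
      hence "a' \<le> P'" by simp
      have "th A B C g N (L+1) a' < a'" using tha' c0a aa by linarith
      hence "P' \<le> a'" using y(6)[of a'] by (simp add: a'_def)
      hence "P' = a'" using \<open>a' \<le> P'\<close> by simp
      thus False using y(1) tha' c0a aa by auto
    qed
  qed
qed

end

lemma theta_eq:
  "theta M p mu g 1 L x = (if 2*L < M then th (p*(1-mu)) (p*mu) ((1-p)*(1-mu)) g M L x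
     else th (p*mu) (p*(1-mu)) ((1-p)*mu) g M L x)"
  by (simp add: theta_def th_def Fh_def Let_def)

lemma pair_main:
  fixes M :: nat and p mu gamma :: real
    and X :: "nat \<Rightarrow> real \<Rightarrow> real" and Plim :: "nat \<Rightarrow> real"
  assumes p: "1/2 < p" "p < 1"
    and mu: "1/2 < mu" "mu \<le> 1"
    and gamma: "0 < gamma" "gamma < 1"
    and sol: "\<And>L. 1 \<le> L \<Longrightarrow> L \<le> M - 1 \<Longrightarrow> mean_dyn_solution M p mu gamma 1 L (X L)"
    and lim: "\<And>L. 1 \<le> L \<Longrightarrow> L \<le> M - 1 \<Longrightarrow> ((X L) \<longlongrightarrow> Plim L) at_top"
    and L: "1 \<le> L" "L + 1 < M" and cl: "2 * L < M \<longleftrightarrow> 2 * (L + 1) < M"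
  shows "Plim (L + 1) \<le> Plim L"
proof -
  have sL: "mean_dyn_solution M p mu gamma 1 L (X L)" using sol L by auto
  have sL1: "mean_dyn_solution M p mu gamma 1 (L+1) (X (L+1))" using sol L by auto
  have lL: "(X L \<longlongrightarrow> Plim L) at_top" using lim L by auto
  have lL1: "(X (L+1) \<longlongrightarrow> Plim (L+1)) at_top" using lim L by auto
  show ?thesis
  proof (cases "2 * L < M")
    case True
    interpret cls "p*(1-mu)" "p*mu" "(1-p)*(1-mu)" gamma M
    proof
      show "p * (1 - mu) + p * mu + (1 - p) * (1 - mu) \<le> 1"
      proof -
        have "(1 - p) * (1 - mu) \<le> (1 - p) * 1" using p mu by (intro mult_left_mono) auto
        thus ?thesis by (simp add: algebra_simps)
      qed
      show "0 < p * mu + (1 - p) * (1 - mu)"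
        using p mu by (intro add_pos_nonneg) auto
    qed (use p mu gamma in auto)
    show ?thesis
      by (rule pair[OF L, where X = "X L" and Y = "X (L+1)"])
         (use sL sL1 lL lL1 True cl in \<open>auto simp: mean_dyn_solution_def theta_eq\<close>)
  next
    case False
    interpret cls "p*mu" "p*(1-mu)" "(1-p)*mu" gamma M
    proof
      show "p * mu + p * (1 - mu) + (1 - p) * mu \<le> 1"
      proof -
        have "(1 - p) * mu \<le> (1 - p) * 1" using p mu by (intro mult_left_mono) auto
        thus ?thesis by (simp add: algebra_simps)
      qed
      show "0 < p * (1 - mu) + (1 - p) * mu"
        using p mu by (intro add_nonneg_pos) auto
    qed (use p mu gamma in auto)
    show ?thesis
      by (rule pair[OF L, where X = "X L" and Y = "X (L+1)"])
         (use sL sL1 lL lL1 False cl in \<open>auto simp: mean_dyn_solution_def theta_eq\<close>)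
  qed
qed

theorem proposition1:
  fixes M :: nat and p q mu gamma :: real
    and X :: "nat \<Rightarrow> real \<Rightarrow> real" and Plim :: "nat \<Rightarrow> real"
  assumes M3: "M \<ge> 3" and Modd: "odd M"
    and p: "1/2 < p" "p < 1"
    and q: "1/2 < q" "q < 1"
    and mu: "1/2 < mu" "mu \<le> 1"
    and muq: "mu * q > p"
    and gamma: "0 < gamma" "gamma < 1"
    and sol: "\<And>L. 1 \<le> L \<Longrightarrow> L \<le> M - 1 \<Longrightarrow> mean_dyn_solution M p mu gamma 1 L (X L)"
    and lim: "\<And>L. 1 \<le> L \<Longrightarrow> L \<le> M - 1 \<Longrightarrow> ((X L) \<longlongrightarrow> Plim L) at_top"
    and j: "1 \<le> j" "j \<le> M - 2" "2 * j \<noteq> M - 1"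
  shows "interim_eff M Plim (j + 1) \<le> interim_eff M Plim j
         \<and> 1 - interim_eff M Plim (M - (j + 1)) \<le> 1 - interim_eff M Plim (M - j)"
proof -
  have c1: "Plim (j + 1) \<le> Plim j"
  proof (rule pair_main[OF p mu gamma])
    show "2 * j < M \<longleftrightarrow> 2 * (j + 1) < M" using j M3 Modd by presburger
  qed (use sol lim j M3 in auto)
  define k where "k = M - (j + 1)"
  have k: "1 \<le> k" "k + 1 < M" "M - j = k + 1" using j M3 by (auto simp: k_def)
  have kc: "2 * k < M \<longleftrightarrow> 2 * (k + 1) < M" using j M3 Modd unfolding k_def by presburger
  have c2: "Plim (k + 1) \<le> Plim k" by (rule pair_main[OF p mu gamma]) (use sol lim k kc in auto)
  have e1: "interim_eff M Plim (j+1) = Plim (j+1)" "interim_eff M Plim j = Plim j"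
    using j M3 by (auto simp: interim_eff_def)
  have e2: "interim_eff M Plim k = Plim k" "interim_eff M Plim (k+1) = Plim (k+1)"
    using k by (auto simp: interim_eff_def)
  show ?thesis using c1 c2 e1 e2 k(3) unfolding k_def[symmetric] by simp
qed

end
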